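(* Let $R=\mathbb{Z}$ (with $K=\mathbb{Q}$) or $R=\mathbb{Z}[i]$ (with $K=\mathbb{Q}(i)$). Let $M=\begin{pmatrix}\alpha&\beta\\ \overline{\beta}&\gamma\end{pmatrix}\in R^{2\times2}$ be positive definite hermitian such that $\Delta:=\det M$ is an absolute square in $K$, let $Q(v)=v^*Mv$, let $\nu$ be a positive integer, $\lambda:=\nu\Delta$, and let $\delta\in\frac1\nu R$ with $|\delta|^2=\Delta$. Then: (1) If $R=\mathbb{Z}$, there exists an integral $Q$-orthoregular basis of norm $\lambda$ and type $\delta$ if and only if $\alpha\nu$ is a sum of two squares of integers. (2) If $R=\mathbb{Z}[i]$, there always exists an integral $Q$-orthoregular basis of norm $\lambda$ and type $\delta$. (3) In both cases, every $a_1\in R^2$ with $Q(a_1)=\lambda$ can be extended to an integral $Q$-orthoregular basis $(a_1,a_2)$ of norm $\lambda$.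
   Context: A rational number is an absolute square in $K$ if it equals $|y|^2$ for some $y\in K$. An integral $Q$-orthoregular basis of norm $\lambda$ is a pair $(a_1,a_2)\in R^2\times R^2$ with $a_1^*Ma_1=a_2^*Ma_2=\lambda$ and $a_1^*Ma_2=0$. It is of type $\delta$ if $a_2=(Ma_1)_\perp/\delta$, where $(x,y)^T_\perp:=(-\overline{y},\overline{x})^T$. *)

theory Defs
  imports "HOL-Analysis.Analysis"
begin

datatype ring_case = IntCase | GaussCase

definition Rset :: "ring_case \<Rightarrow> complex set" where
  "Rset c = (case c of
      IntCase \<Rightarrow> {z. \<exists>n::int. z = of_int n}
    | GaussCase \<Rightarrow> {z. \<exists>m n::int. z = Complex (of_int m) (of_int n)})"

definition Kset :: "ring_case \<Rightarrow> complex set" where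
  "Kset c = (case c of
      IntCase \<Rightarrow> {z. \<exists>q::rat. z = of_rat q}
    | GaussCase \<Rightarrow> {z. \<exists>p q::rat. z = Complex (of_rat p) (of_rat q)})"

definition Rvec :: "ring_case \<Rightarrow> (complex^2) set" where
  "Rvec c = {v. \<forall>i. v $ i \<in> Rset c}"

definition abs_square_in :: "ring_case \<Rightarrow> complex \<Rightarrow> bool" where
  "abs_square_in c x \<longleftrightarrow> (\<exists>y \<in> Kset c. x = of_real ((cmod y)^2))"

definition hform :: "complex^2^2 \<Rightarrow> complex^2 \<Rightarrow> complex^2 \<Rightarrow> complex" where
  "hform M u v = (\<Sum>i\<in>UNIV. cnj (u $ i) * (M *v v) $ i)"

definition hermitian2 :: "complex^2^2 \<Rightarrow> bool" where
  "hermitian2 M \<longleftrightarrow> (\<forall>i j. M $ i $ j = cnj (M $ j $ i))"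

definition posdef2 :: "complex^2^2 \<Rightarrow> bool" where
  "posdef2 M \<longleftrightarrow> (\<forall>v. v \<noteq> 0 \<longrightarrow> hform M v v \<in> \<real> \<and> Re (hform M v v) > 0)"

definition perp :: "complex^2 \<Rightarrow> complex^2" where
  "perp v = vector [- cnj (v $ 2), cnj (v $ 1)]"

definition orthoregular :: "ring_case \<Rightarrow> complex^2^2 \<Rightarrow> complex \<Rightarrow> complex^2 \<Rightarrow> complex^2 \<Rightarrow> bool" where
  "orthoregular c M lam a1 a2 \<longleftrightarrow>
     a1 \<in> Rvec c \<and> a2 \<in> Rvec c \<and>
     hform M a1 a1 = lam \<and> hform M a2 a2 = lam \<and> hform M a1 a2 = 0"

definition orthoregular_type :: "ring_case \<Rightarrow> complex^2^2 \<Rightarrow> complex \<Rightarrow> complex \<Rightarrow> complex^2 \<Rightarrow> complex^2 \<Rightarrow> bool" where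
  "orthoregular_type c M lam \<delta> a1 a2 \<longleftrightarrow>
     orthoregular c M lam a1 a2 \<and> a2 = (1 / \<delta>) *s perp (M *v a1)"

end

theory Submission
  imports Defs "HOL-Computational_Algebra.Primes"
begin


datatype quat = Q (q0: int) (q1: int) (q2: int) (q3: int)

definition qmul :: "quat \<Rightarrow> quat \<Rightarrow> quat" where
 "qmul x y = Q (q0 x*q0 y - q1 x*q1 y - q2 x*q2 y - q3 x*q3 y)
               (q0 x*q1 y + q1 x*q0 y + q2 x*q3 y - q3 x*q2 y)
               (q0 x*q2 y - q1 x*q3 y + q2 x*q0 y + q3 x*q1 y)
               (q0 x*q3 y + q1 x*q2 y - q2 x*q1 y + q3 x*q0 y)"

definition qcnj :: "quat \<Rightarrow> quat" where
 "qcnj x = Q (q0 x) (- q1 x) (- q2 x) (- q3 x)"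

definition qn :: "quat \<Rightarrow> int" where
 "qn x = (q0 x)^2 + (q1 x)^2 + (q2 x)^2 + (q3 x)^2"

definition qsm :: "int \<Rightarrow> quat \<Rightarrow> quat" where
 "qsm m x = Q (m * q0 x) (m * q1 x) (m * q2 x) (m * q3 x)"

definition qadd :: "quat \<Rightarrow> quat \<Rightarrow> quat" where
 "qadd x y = Q (q0 x + q0 y) (q1 x + q1 y) (q2 x + q2 y) (q3 x + q3 y)"

definition qdvd :: "int \<Rightarrow> quat \<Rightarrow> bool" where
 "qdvd m x \<longleftrightarrow> m dvd q0 x \<and> m dvd q1 x \<and> m dvd q2 x \<and> m dvd q3 x"

definition qdiv :: "quat \<Rightarrow> int \<Rightarrow> quat" where
 "qdiv x m = Q (q0 x div m) (q1 x div m) (q2 x div m) (q3 x div m)"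

lemma qmul_assoc: "qmul (qmul x y) z = qmul x (qmul y z)"
  by (simp add: qmul_def algebra_simps)

lemma qn_mul: "qn (qmul x y) = qn x * qn y"
  by (simp add: qn_def qmul_def power2_eq_square algebra_simps)

lemma qn_nonneg: "qn x \<ge> 0"
  by (simp add: qn_def)

lemma qn_zero_iff: "qn x = 0 \<longleftrightarrow> x = Q 0 0 0 0"
  by (cases x) (auto simp: qn_def add_nonneg_eq_0_iff)

lemma qcnj_mul_self: "qmul (qcnj x) x = Q (qn x) 0 0 0"
  by (simp add: qmul_def qcnj_def qn_def power2_eq_square algebra_simps)

lemma qmul_smul_left: "qmul (qsm m x) y = qsm m (qmul x y)"
  by (simp add: qmul_def qsm_def algebra_simps)

lemma qmul_smul_right: "qmul x (qsm m y) = qsm m (qmul x y)"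
  by (simp add: qmul_def qsm_def algebra_simps)

lemma qn_smul: "qn (qsm m x) = m^2 * qn x"
  by (simp add: qn_def qsm_def power_mult_distrib algebra_simps)

lemma qmul_add_left: "qmul (qadd x y) z = qadd (qmul x z) (qmul y z)"
  by (simp add: qmul_def qadd_def algebra_simps)

lemma qdvd_iff_smul: "qdvd m x \<longleftrightarrow> (\<exists>y. x = qsm m y)"
proof
  assume "qdvd m x"
  then obtain a b c d where "q0 x = m*a" "q1 x = m*b" "q2 x = m*c" "q3 x = m*d"
    by (auto simp: qdvd_def elim!: dvdE)
  then have "x = qsm m (Q a b c d)" by (cases x) (simp add: qsm_def)
  then show "\<exists>y. x = qsm m y" by blast
next
  assume "\<exists>y. x = qsm m y" then show "qdvd m x" by (auto simp: qdvd_def qsm_def)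
qed

lemma qdvd_smul: "qdvd m (qsm m y)" by (auto simp: qdvd_def qsm_def)

lemma qdvd_mul_left: "qdvd m y \<Longrightarrow> qdvd m (qmul x y)"
  by (auto simp: qdvd_iff_smul qmul_smul_right)

lemma qdvd_mul_right: "qdvd m x \<Longrightarrow> qdvd m (qmul x y)"
  by (auto simp: qdvd_iff_smul qmul_smul_left)

lemma qdvd_add: "qdvd m x \<Longrightarrow> qdvd m y \<Longrightarrow> qdvd m (qadd x y)"
  by (auto simp: qdvd_def qadd_def)

lemma qdiv_smul: "m \<noteq> 0 \<Longrightarrow> qdiv (qsm m y) m = y"
  by (cases y) (simp add: qdiv_def qsm_def)

lemma smul_qdiv: "qdvd m x \<Longrightarrow> qsm m (qdiv x m) = x"
  by (cases x) (simp add: qdiv_def qsm_def qdvd_def)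

lemma qdvd_coprime:
  assumes "prime (p::int)" "\<not> p dvd m" "qdvd p (qsm m x)"
  shows "qdvd p x"
  using assms by (auto simp: qdvd_def qsm_def prime_dvd_mult_iff)

lemma qdvd_trans_mult: "qdvd (a*b) x \<Longrightarrow> qdvd a x"
  by (auto simp: qdvd_def intro: dvd_mult_left)

lemma qsm_qsm: "qsm a (qsm b x) = qsm (a*b) x"
  by (simp add: qsm_def)


lemma parity4:
  fixes a b c d :: int
  assumes "even (a^2 + b^2 + c^2 + d^2)"
  shows "(even (a - b) \<and> even (c - d)) \<or> (even (a - c) \<and> even (b - d)) \<or> (even (a - d) \<and> even (b - c))"
proof -
  have "even (a+b+c+d)" using assms by (simp add: power2_eq_square)
  then show ?thesis by presburger
qed

lemma qparity:
  assumes "even (qn x)"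
  shows "\<exists>u. qn u = 2 \<and> qdvd 2 (qmul u x)"
proof -
  obtain a b c d where x: "x = Q a b c d" by (cases x)
  have "(even (a - b) \<and> even (c - d)) \<or> (even (a - c) \<and> even (b - d)) \<or> (even (a - d) \<and> even (b - c))"
    using parity4[of a b c d] assms by (simp add: qn_def x)
  then show ?thesis
  proof (elim disjE conjE)
    assume "even (a - b)" "even (c - d)"
    then have "qdvd 2 (qmul (Q 1 1 0 0) x)"
      by (simp add: qdvd_def qmul_def x; presburger)
    then show ?thesis by (intro exI[of _ "Q 1 1 0 0"]) (simp add: qn_def)
  next
    assume "even (a - c)" "even (b - d)"
    then have "qdvd 2 (qmul (Q 1 0 1 0) x)"
      by (simp add: qdvd_def qmul_def x; presburger)
    then show ?thesis by (intro exI[of _ "Q 1 0 1 0"]) (simp add: qn_def)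
  next
    assume "even (a - d)" "even (b - c)"
    then have "qdvd 2 (qmul (Q 1 0 0 1) x)"
      by (simp add: qdvd_def qmul_def x; presburger)
    then show ?thesis by (intro exI[of _ "Q 1 0 0 1"]) (simp add: qn_def)
  qed
qed

definition cr :: "int \<Rightarrow> int \<Rightarrow> int" where
  "cr a m = (a + (m - 1) div 2) mod m - (m - 1) div 2"

lemma cr_bound:
  assumes "m > 0" "odd m"
  shows "2 * \<bar>cr a m\<bar> \<le> m - 1"
proof -
  have "0 \<le> (a + (m - 1) div 2) mod m" "(a + (m - 1) div 2) mod m < m"
    using assms by auto
  moreover have "2 * ((m - 1) div 2) = m - 1" using assms by presburger
  ultimately have "\<bar>cr a m\<bar> \<le> (m - 1) div 2" unfolding cr_def abs_le_iff by linarith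
  then show ?thesis using \<open>2 * ((m - 1) div 2) = m - 1\<close> by linarith
qed

lemma cr_dvd: "m dvd (cr a m - a)"
proof -
  have "cr a m - a = (a + (m - 1) div 2) mod m - (a + (m - 1) div 2)"
    by (simp add: cr_def)
  also have "\<dots> = m * (- ((a + (m - 1) div 2) div m))"
    using div_mult_mod_eq[of "a + (m - 1) div 2" m] by (simp add: algebra_simps)
  also have "m dvd \<dots>" by simp
  finally show ?thesis .
qed

lemma cr_sq_bound:
  assumes "m > 0" "odd m"
  shows "4 * (cr a m)^2 \<le> (m - 1)^2"
proof -
  have "(2 * \<bar>cr a m\<bar>)^2 \<le> (m - 1)^2"
    using cr_bound[OF assms, of a] by (intro power_mono) auto
  then show ?thesis by (simp add: power_mult_distrib)
qed

definition qred :: "quat \<Rightarrow> int \<Rightarrow> quat" where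
  "qred x m = Q (cr (q0 x) m) (cr (q1 x) m) (cr (q2 x) m) (cr (q3 x) m)"

lemma qred_bound:
  assumes "m > 0" "odd m"
  shows "4 * qn (qred x m) \<le> 4 * (m - 1)^2"
  using cr_sq_bound[OF assms, of "q0 x"] cr_sq_bound[OF assms, of "q1 x"]
    cr_sq_bound[OF assms, of "q2 x"] cr_sq_bound[OF assms, of "q3 x"]
  by (simp add: qn_def qred_def)

lemma qred_eq: "\<exists>t. qred x m = qadd x (qsm m t)"
proof -
  obtain a where a: "cr (q0 x) m - q0 x = m * a" using cr_dvd by (blast elim: dvdE)
  obtain b where b: "cr (q1 x) m - q1 x = m * b" using cr_dvd by (blast elim: dvdE)
  obtain c where c: "cr (q2 x) m - q2 x = m * c" using cr_dvd by (blast elim: dvdE)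
  obtain d where d: "cr (q3 x) m - q3 x = m * d" using cr_dvd by (blast elim: dvdE)
  have "qred x m = qadd x (qsm m (Q a b c d))"
    using a b c d by (simp add: qred_def qadd_def qsm_def algebra_simps)
  then show ?thesis by blast
qed

lemma qn_qadd_sm: "qn (qadd x (qsm m t)) = qn x + m * (2 * (q0 x * q0 t + q1 x * q1 t + q2 x * q2 t + q3 x * q3 t) + m * qn t)"
  by (simp add: qn_def qadd_def qsm_def power2_eq_square algebra_simps)

lemma qcnj_qadd_sm_mul:
  "qmul (qcnj (qadd x (qsm m t))) x = qadd (Q (qn x) 0 0 0) (qsm m (qmul (qcnj t) x))"
  by (simp add: qmul_def qcnj_def qadd_def qsm_def qn_def power2_eq_square algebra_simps)

lemma qn_qcnj: "qn (qcnj x) = qn x" by (simp add: qn_def qcnj_def)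

lemma qdvd_Q0: "m dvd a \<Longrightarrow> qdvd m (Q a 0 0 0)" by (simp add: qdvd_def)

lemma qsm_neg_qadd: "qadd x (qsm m t) = Q 0 0 0 0 \<Longrightarrow> x = qsm m (qsm (-1) t)"
  by (cases x; cases t) (simp add: qadd_def qsm_def; linarith)


lemma prime_odd_not_dvd2: "prime (p::int) \<Longrightarrow> odd p \<Longrightarrow> \<not> p dvd 2"
proof
  assume "prime p" "odd p" "p dvd 2"
  then have "p \<le> 2" "p > 1" using zdvd_imp_le[of p 2] prime_gt_1_int by auto
  then have "p = 2" by simp
  then show False using \<open>odd p\<close> by simp
qed

lemma descent:
  fixes p :: int and J :: "quat \<Rightarrow> bool"
  assumes p: "prime p" "odd p"
    and J_left': "\<forall>x y. J x \<longrightarrow> J (qmul y x)"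
    and J_div': "\<forall>x m. \<not> p dvd m \<and> J (qsm m x) \<longrightarrow> J x"
  shows "J x \<Longrightarrow> qn x = m * p \<Longrightarrow> 0 < m \<Longrightarrow> m < p \<Longrightarrow> \<exists>z. J z \<and> qn z = p"
proof (induction "nat m" arbitrary: x m rule: less_induct)
  case less
  have J_left: "\<And>x y. J x \<Longrightarrow> J (qmul y x)" using J_left' by blast
  have J_div: "\<And>x m. \<not> p dvd m \<Longrightarrow> J (qsm m x) \<Longrightarrow> J x" using J_div' by blast
  have p0: "p > 1" using p prime_gt_1_int by blast
  show ?case
  proof (cases "m = 1")
    case True then show ?thesis using less by auto
  next
    case m1: False
    show ?thesis
    proof (cases "even m")
      case True
      then have "even (qn x)" using less by simp
      then obtain u where u: "qn u = 2" "qdvd 2 (qmul u x)" using qparity by blast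
      define z where "z = qdiv (qmul u x) 2"
      have z: "qsm 2 z = qmul u x" using u smul_qdiv z_def by simp
      have "J (qmul u x)" using J_left less by blast
      then have Jz: "J z" using J_div[of 2 z] z prime_odd_not_dvd2 p by simp
      have "4 * qn z = 2 * (m * p)" using qn_smul[of 2 z] z qn_mul[of u x] u less by simp
      then have qz: "qn z = (m div 2) * p" using True by auto
      have "m div 2 > 0" using True less m1 by presburger
      moreover have "nat (m div 2) < nat m" using less by simp
      ultimately show ?thesis using less(1)[of "m div 2" z] Jz qz less by simp
    next
      case odd: False
      have m3: "m > 1" using less m1 by simp
      obtain t where t: "qred x m = qadd x (qsm m t)" using qred_eq by blast
      define y where "y = qred x m"
      have "m dvd qn y" using t qn_qadd_sm[of x m t] less y_def by simp
      then obtain r where r: "qn y = m * r" by (blast elim: dvdE)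
      have "4 * qn y \<le> 4 * (m - 1)^2" using qred_bound[of m x] less odd y_def by simp
      then have "m * r \<le> (m - 1)^2" using r by simp
      also have "\<dots> < m * m" using m3 by (simp add: power2_eq_square algebra_simps)
      finally have rm: "r < m" using less by simp
      have "0 \<le> m * r" using qn_nonneg[of y] r by simp
      then have r0: "r \<ge> 0" using less by (simp add: zero_le_mult_iff)
      show ?thesis
      proof (cases "r = 0")
        case True
        then have "y = Q 0 0 0 0" using r qn_zero_iff by simp
        then have xe: "x = qsm m (qsm (-1) t)" using qsm_neg_qadd t y_def by simp
        have "\<not> p dvd m" using less p0 by (simp add: zdvd_not_zless)
        then have "J (qsm (-1) t)" using J_div less xe by metis
        have "m * m * qn (qsm (-1) t) = m * p" using less xe qn_smul[of m] by (simp add: power2_eq_square)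
        then have "m * qn (qsm (-1) t) = p" using less by simp
        then have "m dvd p" by (metis dvd_triv_left)
        moreover have "\<forall>k. 0 \<le> k \<and> k dvd p \<longrightarrow> k = 1 \<or> k = p" using prime_int_iff p by blast
        ultimately have "m = 1 \<or> m = p" using \<open>0 < m\<close> by auto
        then show ?thesis using m1 less by simp
      next
        case False
        then have r1: "r > 0" using r0 by simp
        define w where "w = qmul (qcnj y) x"
        have w: "w = qadd (Q (qn x) 0 0 0) (qsm m (qmul (qcnj t) x))"
          using qcnj_qadd_sm_mul t y_def w_def by simp
        have "qdvd m w" unfolding w using less
          by (intro qdvd_add qdvd_Q0 qdvd_smul) simp
        define z where "z = qdiv w m"
        have z: "qsm m z = w" using \<open>qdvd m w\<close> smul_qdiv z_def by simp
        have "J w" using J_left less w_def by blast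
        have "\<not> p dvd m" using less p0 by (simp add: zdvd_not_zless)
        then have Jz: "J z" using J_div z \<open>J w\<close> by metis
        have "m * m * qn z = (m * r) * (m * p)"
          using qn_smul[of m z] z qn_mul[of "qcnj y" x] qn_qcnj[of y] r less w_def
          by (simp add: power2_eq_square)
        then have qz: "qn z = r * p" using less by (simp add: algebra_simps)
        have "nat r < nat m" using rm r1 by simp
        then show ?thesis using less(1)[of r z] Jz qz r1 rm less by simp
      qed
    qed
  qed
qed



lemma dvd_small:
  fixes p x :: int
  assumes "p dvd x" "\<bar>x\<bar> < p"
  shows "x = 0"
proof -
  obtain k where k: "x = p * k" using assms(1) by (blast elim: dvdE)
  show ?thesis
  proof (rule ccontr)
    assume "x \<noteq> 0"
    then have "k \<noteq> 0" using k by simp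
    then have "1 \<le> \<bar>k\<bar>" by simp
    have "p > 0" using assms(2) by simp
    then have "\<bar>x\<bar> = p * \<bar>k\<bar>" using k by (simp add: abs_mult)
    also have "\<dots> \<ge> p * 1" using \<open>1 \<le> \<bar>k\<bar>\<close> \<open>p > 0\<close> by (intro mult_left_mono) auto
    finally show False using assms(2) by simp
  qed
qed

lemma sq_mod_inj:
  fixes p :: int
  assumes p: "prime p" "odd p" and a: "0 \<le> a" "a \<le> (p - 1) div 2" and b: "0 \<le> b" "b \<le> (p - 1) div 2"
    and eq: "p dvd (a^2 - b^2)"
  shows "a = b"
proof -
  have "a^2 - b^2 = (a - b) * (a + b)" by (simp add: power2_eq_square algebra_simps)
  then have "p dvd (a - b) \<or> p dvd (a + b)" using eq p prime_dvd_mult_iff by metis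
  moreover have "2 * ((p - 1) div 2) = p - 1" using p by presburger
  ultimately show ?thesis
  proof (elim disjE)
    assume "p dvd a - b"
    moreover have "\<bar>a - b\<bar> < p" using a b \<open>2 * ((p - 1) div 2) = p - 1\<close> by linarith
    ultimately have "a - b = 0" by (rule dvd_small)
    then show ?thesis by simp
  next
    assume "p dvd a + b"
    moreover have "a + b < p" "0 \<le> a + b" using a b \<open>2 * ((p - 1) div 2) = p - 1\<close> by linarith+
    ultimately have "a + b = 0" using dvd_small[of p "a + b"] by simp
    then show ?thesis using a b by simp
  qed
qed

lemma pigeon:
  fixes p :: int
  assumes p: "prime p" "odd p"
  shows "\<exists>a b. 0 \<le> a \<and> a \<le> (p - 1) div 2 \<and> 0 \<le> b \<and> b \<le> (p - 1) div 2 \<and> p dvd (a^2 + b^2 + 1)"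
proof (rule ccontr)
  assume na: "\<not> ?thesis"
  define H where "H = (p - 1) div 2"
  have p1: "p > 1" using p prime_gt_1_int by blast
  have H2: "2 * H = p - 1" using p unfolding H_def by presburger
  define f where "f = (\<lambda>a. a^2 mod p)"
  define g where "g = (\<lambda>b. (- 1 - b^2) mod p)"
  have injf: "inj_on f {0..H}"
  proof (rule inj_onI)
    fix a b assume "a \<in> {0..H}" "b \<in> {0..H}" "f a = f b"
    then show "a = b" using sq_mod_inj[OF p, of a b] by (auto simp: f_def H_def mod_eq_dvd_iff)
  qed
  have injg: "inj_on g {0..H}"
  proof (rule inj_onI)
    fix a b assume ab: "a \<in> {0..H}" "b \<in> {0..H}" "g a = g b"
    then have "p dvd (- 1 - a^2) - (- 1 - b^2)" by (auto simp: g_def mod_eq_dvd_iff)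
    then have "p dvd b^2 - a^2" by (simp add: algebra_simps)
    then show "a = b" using sq_mod_inj[OF p, of b a] ab by (auto simp: H_def)
  qed
  have disj: "f ` {0..H} \<inter> g ` {0..H} = {}"
  proof (rule ccontr)
    assume "f ` {0..H} \<inter> g ` {0..H} \<noteq> {}"
    then obtain c where "c \<in> f ` {0..H}" "c \<in> g ` {0..H}" by blast
    then obtain a b where ab: "a \<in> {0..H}" "b \<in> {0..H}" "f a = g b" by blast
    then have "p dvd a^2 - (- 1 - b^2)" by (auto simp: f_def g_def mod_eq_dvd_iff)
    then have "p dvd a^2 + b^2 + 1" by (simp add: algebra_simps)
    then show False using na ab by (auto simp: H_def)
  qed
  have sub: "f ` {0..H} \<union> g ` {0..H} \<subseteq> {0..<p}"
    using p1 by (auto simp: f_def g_def)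
  have "card (f ` {0..H} \<union> g ` {0..H}) = card (f ` {0..H}) + card (g ` {0..H})"
    using disj by (intro card_Un_disjoint) auto
  also have "\<dots> = 2 * nat (H + 1)" using injf injg by (simp add: card_image)
  also have "\<dots> = nat (p + 1)" using H2 p1 by simp
  finally have "nat (p + 1) \<le> card {0..<p}" using card_mono[OF _ sub] by (metis finite_atLeastLessThan_int)
  then show False using p1 by simp
qed


lemma Fp_odd:
  fixes p :: int
  assumes p: "prime p" "odd p" and dv: "p dvd qn w"
  shows "\<exists>\<xi>. qn \<xi> = p \<and> qdvd p (qmul \<xi> w)"
proof -
  define J where "J = (\<lambda>x. qdvd p (qmul x w))"
  have p1: "p > 1" using p prime_gt_1_int by blast
  have H2: "2 * ((p - 1) div 2) = p - 1" using p by presburger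
  have J_left: "\<And>x y. J x \<Longrightarrow> J (qmul y x)" unfolding J_def
    by (simp add: qmul_assoc qdvd_mul_left)
  have J_div: "\<And>x m. \<not> p dvd m \<Longrightarrow> J (qsm m x) \<Longrightarrow> J x" unfolding J_def
    using qdvd_coprime[OF p(1)] by (simp add: qmul_smul_left)
  have "\<exists>x m. J x \<and> qn x = m * p \<and> 0 < m \<and> m < p"
  proof (cases "qdvd p w")
    case True
    then obtain w' where w': "w = qsm p w'" using qdvd_iff_smul by blast
    obtain a b where ab: "0 \<le> a" "a \<le> (p - 1) div 2" "0 \<le> b" "b \<le> (p - 1) div 2" "p dvd (a^2 + b^2 + 1)"
      using pigeon[OF p] by blast
    define x where "x = Q a b 1 0"
    have Jx: "J x" unfolding J_def w' by (simp add: qmul_smul_right qdvd_smul)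
    obtain m where m: "a^2 + b^2 + 1 = p * m" using ab(5) by (blast elim: dvdE)
    have "4 * a^2 \<le> (p - 1)^2" "4 * b^2 \<le> (p - 1)^2"
      using power_mono[of "2*a" "p - 1" 2] power_mono[of "2*b" "p - 1" 2] ab H2
      by (auto simp: power_mult_distrib)
    then have "4 * (p * m) \<le> 2 * (p - 1)^2 + 4" using m by linarith
    moreover have "p * p \<ge> 2 * p" using p1 by simp
    moreover have "(p - 1)^2 = p * p - 2 * p + 1" by (simp add: power2_eq_square algebra_simps)
    ultimately have lt: "4 * (p * m) < 4 * (p * p)" using p1 by linarith
    have "m < p"
    proof (rule ccontr)
      assume "\<not> m < p"
      then have "p * p \<le> p * m" using p1 by (intro mult_left_mono) auto
      then show False using lt by linarith
    qed
    moreover have "m > 0"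
    proof -
      have "0 < a^2 + b^2 + 1" by (simp add: add_pos_nonneg)
      then have "0 < p * m" using m by simp
      then show ?thesis using p1 by (simp add: zero_less_mult_iff)
    qed
    moreover have "qn x = m * p" using m by (simp add: qn_def x_def algebra_simps)
    ultimately show ?thesis using Jx by blast
  next
    case False
    obtain t where t: "qred (qcnj w) p = qadd (qcnj w) (qsm p t)" using qred_eq by blast
    define x where "x = qred (qcnj w) p"
    have xw: "qmul x w = qadd (Q (qn w) 0 0 0) (qsm p (qmul (qcnj (qcnj t)) w))"
    proof -
      have "qmul x w = qmul (qcnj (qadd w (qsm p (qcnj t)))) w"
        using t x_def by (cases w; cases t) (simp add: qcnj_def qadd_def qsm_def)
      then show ?thesis using qcnj_qadd_sm_mul by simp
    qed
    have Jx: "J x" unfolding J_def xw by (intro qdvd_add qdvd_Q0 dv qdvd_smul)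
    have "p dvd qn x" using t x_def qn_qadd_sm[of "qcnj w" p t] qn_qcnj[of w] dv by simp
    then obtain m where m: "qn x = p * m" by (blast elim: dvdE)
    have "4 * qn x \<le> 4 * (p - 1)^2" using qred_bound[of p "qcnj w"] p p1 x_def by simp
    then have "p * m \<le> (p - 1)^2" using m by simp
    moreover have "(p - 1)^2 = p * p - 2 * p + 1" by (simp add: power2_eq_square algebra_simps)
    ultimately have lt: "p * m < p * p" using p1 by linarith
    have "m < p"
    proof (rule ccontr)
      assume "\<not> m < p"
      then have "p * p \<le> p * m" using p1 by (intro mult_left_mono) auto
      then show False using lt by linarith
    qed
    moreover have "x \<noteq> Q 0 0 0 0"
    proof
      assume "x = Q 0 0 0 0"
      then have "qcnj w = qsm p (qsm (-1) t)" using qsm_neg_qadd t x_def by simp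
      then have "qdvd p (qcnj w)" by (simp add: qdvd_smul)
      then have "qdvd p w" by (cases w) (simp add: qdvd_def qcnj_def)
      then show False using False by simp
    qed
    then have "qn x > 0" using qn_zero_iff qn_nonneg by (metis less_le)
    then have "m > 0" using m p1 by (simp add: zero_less_mult_iff)
    ultimately show ?thesis using Jx m by (metis mult.commute)
  qed
  then obtain x m where "J x" "qn x = m * p" "0 < m" "m < p" by blast
  moreover have "\<forall>x y. J x \<longrightarrow> J (qmul y x)" using J_left by blast
  moreover have "\<forall>x m. \<not> p dvd m \<and> J (qsm m x) \<longrightarrow> J x" using J_div by blast
  ultimately have "\<exists>z. J z \<and> qn z = p" using descent[OF p] by blast
  then show ?thesis unfolding J_def by blast
qed

lemma Fp:
  fixes p :: int
  assumes p: "prime p" and dv: "p dvd qn w"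
  shows "\<exists>\<xi>. qn \<xi> = p \<and> qdvd p (qmul \<xi> w)"
proof (cases "odd p")
  case True then show ?thesis using Fp_odd p dv by blast
next
  case False
  then have "(2::int) dvd p" by simp
  moreover have h: "\<forall>m. 0 \<le> m \<and> m dvd p \<longrightarrow> m = 1 \<or> m = p" using prime_int_iff p by blast
  ultimately have "(2::int) = 1 \<or> 2 = p" using h[rule_format, of 2] by simp
  then have "p = 2" by simp
  then show ?thesis using qparity dv by auto
qed

lemma lemmaF:
  fixes a :: int
  shows "a > 0 \<Longrightarrow> a dvd qn w \<Longrightarrow> \<exists>\<xi>. qn \<xi> = a \<and> qdvd a (qmul \<xi> w)"
proof (induction "nat a" arbitrary: a w rule: less_induct)
  case less
  show ?case
  proof (cases "a = 1")
    case True
    then show ?thesis by (intro exI[of _ "Q 1 0 0 0"]) (simp add: qn_def qdvd_def)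
  next
    case False
    then obtain p where p: "prime p" "p dvd a" using prime_factor_int[of a] less by auto
    obtain a' where a': "a = p * a'" using p by (blast elim: dvdE)
    have p1: "p > 1" using p prime_gt_1_int by blast
    have a'0: "a' > 0" using a' less p1 by (simp add: zero_less_mult_iff)
    obtain \<xi>1 where x1: "qn \<xi>1 = p" "qdvd p (qmul \<xi>1 w)"
      using Fp[OF p(1)] less p dvd_trans by blast
    obtain w1 where w1: "qmul \<xi>1 w = qsm p w1" using x1 qdvd_iff_smul by blast
    have "p * p * qn w1 = p * qn w" using qn_smul[of p w1] w1 qn_mul[of \<xi>1 w] x1
      by (simp add: power2_eq_square)
    then have qw1: "p * qn w1 = qn w" using p1 by simp
    have "a' dvd qn w1"
    proof -
      obtain k where "qn w = a * k" using less by (blast elim: dvdE)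
      then have "p * qn w1 = p * (a' * k)" using qw1 a' by (simp add: algebra_simps)
      then have "qn w1 = a' * k" using p1 by simp
      then show ?thesis by simp
    qed
    moreover have "nat a' < nat a" using a' p1 a'0 by simp
    ultimately obtain \<xi>' where x': "qn \<xi>' = a'" "qdvd a' (qmul \<xi>' w1)"
      using less(1)[of a' w1] a'0 by blast
    obtain \<eta> where eta: "qmul \<xi>' w1 = qsm a' \<eta>" using x' qdvd_iff_smul by blast
    have "qmul (qmul \<xi>' \<xi>1) w = qsm a \<eta>"
      using a' by (simp add: qmul_assoc w1 qmul_smul_right eta qsm_qsm algebra_simps)
    moreover have "qn (qmul \<xi>' \<xi>1) = a" using x' x1 a' by (simp add: qn_mul)
    ultimately show ?thesis by (metis qdvd_smul)
  qed
qed


definition cr2 :: "int \<Rightarrow> int \<Rightarrow> int" where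
  "cr2 a m = (a + m div 2) mod m - m div 2"

lemma cr2_bound:
  assumes "m > 0"
  shows "2 * \<bar>cr2 a m\<bar> \<le> m"
proof -
  have "0 \<le> (a + m div 2) mod m" "(a + m div 2) mod m < m"
    using assms by auto
  moreover have "m - 1 \<le> 2 * (m div 2)" "2 * (m div 2) \<le> m" by presburger+
  ultimately have x: "- (m div 2) \<le> cr2 a m" "cr2 a m \<le> m - 1 - m div 2" unfolding cr2_def by linarith+
  show ?thesis
  proof (cases "cr2 a m < 0")
    case True then show ?thesis using x \<open>2 * (m div 2) \<le> m\<close> by linarith
  next
    case False then show ?thesis using x \<open>m - 1 \<le> 2 * (m div 2)\<close> by linarith
  qed
qed

lemma cr2_eq: "\<exists>r. a = m * r + cr2 a m"
proof -
  have "a = m * ((a + m div 2) div m) + cr2 a m"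
    using div_mult_mod_eq[of "a + m div 2" m] by (simp add: cr2_def algebra_simps)
  then show ?thesis by blast
qed

lemma DC:
  fixes a b n k :: int
  shows "k > 0 \<Longrightarrow> a^2 + b^2 = n * k^2 \<Longrightarrow> \<exists>x y. x^2 + y^2 = n"
proof (induction "nat k" arbitrary: a b k rule: less_induct)
  case less
  show ?case
  proof (cases "k dvd a \<and> k dvd b")
    case True
    then obtain a1 b1 where ab: "a = k * a1" "b = k * b1" by (blast elim: dvdE)
    then have "k^2 * (a1^2 + b1^2) = k^2 * n" using less by (simp add: power_mult_distrib algebra_simps)
    then have "a1^2 + b1^2 = n" using less by simp
    then show ?thesis by blast
  next
    case False
    define e1 where "e1 = cr2 a k"
    define e2 where "e2 = cr2 b k"
    obtain r1 where r1: "a = k * r1 + e1" using cr2_eq e1_def by blast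
    obtain r2 where r2: "b = k * r2 + e2" using cr2_eq e2_def by blast
    have b1: "2 * \<bar>e1\<bar> \<le> k" "2 * \<bar>e2\<bar> \<le> k" using cr2_bound less e1_def e2_def by auto
    define S where "S = r1^2 + r2^2"
    define T where "T = r1 * e1 + r2 * e2"
    define N where "N = e1^2 + e2^2"
    have abexp: "a^2 + b^2 = k^2 * S + 2 * k * T + N"
      unfolding r1 r2 S_def T_def N_def by (simp add: power2_eq_square algebra_simps)
    have "k * (k * S + 2 * T) + N = k * (n * k)" using abexp less by (simp add: power2_eq_square algebra_simps)
    then have "k dvd N" by (metis dvd_add_right_iff dvd_triv_left)
    then obtain k' where k': "N = k * k'" by (blast elim: dvdE)
    have "k * (k * S + 2 * T + k') = k * (n * k)" using abexp less k' by (simp add: power2_eq_square algebra_simps)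
    then have h: "k * S + 2 * T + k' = n * k" using less by simp
    have "N \<noteq> 0"
    proof
      assume "N = 0"
      then have "e1 = 0" "e2 = 0" unfolding N_def by (auto simp: add_nonneg_eq_0_iff)
      then show False using False r1 r2 by simp
    qed
    then have N0: "N > 0" unfolding N_def by (metis add_nonneg_nonneg zero_le_power2 less_le)
    have "4 * e1^2 \<le> k^2" "4 * e2^2 \<le> k^2"
      using power_mono[of "2 * \<bar>e1\<bar>" k 2] power_mono[of "2 * \<bar>e2\<bar>" k 2] b1
      by (auto simp: power_mult_distrib)
    then have "2 * N \<le> k * k" unfolding N_def by (simp add: power2_eq_square)
    then have "2 * (k * k') \<le> k * k" using k' by simp
    then have "2 * k' \<le> k" using less by (simp add: algebra_simps)
    then have kk: "k' < k" using N0 k' less by (simp add: zero_less_mult_iff)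
    have k'0: "k' > 0" using N0 k' less by (simp add: zero_less_mult_iff)
    define a2 where "a2 = k' * r1 + (S - n) * e1"
    define b2 where "b2 = k' * r2 + (S - n) * e2"
    have "a2^2 + b2^2 = k'^2 * S + k' * (S - n) * (2 * T) + (S - n)^2 * N"
      unfolding a2_def b2_def S_def T_def N_def by (simp add: power2_eq_square algebra_simps)
    also have "\<dots> = k'^2 * S + k' * (S - n) * (n * k - k * S - k') + (S - n)^2 * (k * k')"
    proof -
      have T2: "2 * T = n * k - k * S - k'" using h by linarith
      show ?thesis by (simp only: T2 k')
    qed
    also have "\<dots> = n * k'^2" by (simp add: power2_eq_square algebra_simps)
    finally have "a2^2 + b2^2 = n * k'^2" .
    moreover have "nat k' < nat k" using kk k'0 by simp
    ultimately show ?thesis using less(1)[of k' a2 b2] k'0 by blast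
  qed
qed



lemma ZI_iff: "z \<in> Rset GaussCase \<longleftrightarrow> Re z \<in> \<int> \<and> Im z \<in> \<int>"
proof
  assume "z \<in> Rset GaussCase"
  then show "Re z \<in> \<int> \<and> Im z \<in> \<int>" by (auto simp: Rset_def)
next
  assume "Re z \<in> \<int> \<and> Im z \<in> \<int>"
  then obtain m n where "Re z = of_int m" "Im z = of_int n" by (auto elim!: Ints_cases)
  then have "z = Complex (of_int m) (of_int n)" by (simp add: complex_eq_iff)
  then show "z \<in> Rset GaussCase" by (auto simp: Rset_def)
qed

lemma ZZ_iff: "z \<in> Rset IntCase \<longleftrightarrow> Re z \<in> \<int> \<and> Im z = 0"
proof
  assume "z \<in> Rset IntCase"
  then show "Re z \<in> \<int> \<and> Im z = 0" by (auto simp: Rset_def)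
next
  assume "Re z \<in> \<int> \<and> Im z = 0"
  then obtain m where "Re z = of_int m" "Im z = 0" by (auto elim!: Ints_cases)
  then have "z = of_int m" by (simp add: complex_eq_iff)
  then show "z \<in> Rset IntCase" by (auto simp: Rset_def)
qed

lemma Rset_add: "x \<in> Rset c \<Longrightarrow> y \<in> Rset c \<Longrightarrow> x + y \<in> Rset c"
  by (cases c) (auto simp: ZI_iff ZZ_iff)
lemma Rset_diff: "x \<in> Rset c \<Longrightarrow> y \<in> Rset c \<Longrightarrow> x - y \<in> Rset c"
  by (cases c) (auto simp: ZI_iff ZZ_iff)
lemma Rset_mult: "x \<in> Rset c \<Longrightarrow> y \<in> Rset c \<Longrightarrow> x * y \<in> Rset c"
  by (cases c) (auto simp: ZI_iff ZZ_iff)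
lemma Rset_uminus: "x \<in> Rset c \<Longrightarrow> - x \<in> Rset c"
  by (cases c) (auto simp: ZI_iff ZZ_iff)
lemma Rset_cnj: "x \<in> Rset c \<Longrightarrow> cnj x \<in> Rset c"
  by (cases c) (auto simp: ZI_iff ZZ_iff)
lemma Rset_of_int: "(of_int n :: complex) \<in> Rset c"
  by (cases c) (auto simp: ZI_iff ZZ_iff)
lemma Rset_of_nat: "(of_nat n :: complex) \<in> Rset c"
  using Rset_of_int[of "int n" c] by simp
lemma ZZ_sub_ZI: "x \<in> Rset IntCase \<Longrightarrow> x \<in> Rset GaussCase"
  by (auto simp: ZI_iff ZZ_iff)
lemma ZZ_cnj: "x \<in> Rset IntCase \<Longrightarrow> cnj x = x"
  by (auto simp: ZZ_iff complex_eq_iff)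
lemma ZZ_ex: "x \<in> Rset IntCase \<Longrightarrow> \<exists>n. x = of_int n"
  by (auto simp: Rset_def)
lemma ZI_ex: "x \<in> Rset GaussCase \<Longrightarrow> \<exists>a b. x = Complex (of_int a) (of_int b)"
  by (auto simp: Rset_def)
lemma ZI_Complex: "Complex (of_int a) (of_int b) \<in> Rset GaussCase"
  by (auto simp: Rset_def)

lemma ZI_real_int: "x \<in> Rset GaussCase \<Longrightarrow> cnj x = x \<Longrightarrow> \<exists>n. x = of_int n"
proof -
  assume "x \<in> Rset GaussCase" "cnj x = x"
  then have "Im x = 0" "Re x \<in> \<int>" by (auto simp: ZI_iff complex_eq_iff)
  then show ?thesis by (metis ZZ_ex ZZ_iff)
qed

lemma norm_ZI: "Complex (of_int a) (of_int b) * cnj (Complex (of_int a) (of_int b)) = of_int (a^2 + b^2)"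
  by (simp add: complex_eq_iff power2_eq_square)

lemma div_int_ZI:
  assumes "m \<noteq> 0"
  shows "Complex (of_int (m * a)) (of_int (m * b)) / of_int m = Complex (of_int a) (of_int b)"
  using assms by (simp add: complex_eq_iff)

lemma F_complex:
  assumes w1: "w1 \<in> Rset GaussCase" and w2: "w2 \<in> Rset GaussCase" and a: "(a::int) > 0"
    and dv: "w1 * cnj w1 + w2 * cnj w2 = of_int (a * K)"
  shows "\<exists>s q. s \<in> Rset GaussCase \<and> q \<in> Rset GaussCase \<and> s * cnj s + q * cnj q = of_int a
           \<and> (s * w1 - q * cnj w2) / of_int a \<in> Rset GaussCase
           \<and> (s * w2 + q * cnj w1) / of_int a \<in> Rset GaussCase"
proof -
  obtain a1 b1 where e1: "w1 = Complex (of_int a1) (of_int b1)" using ZI_ex w1 by blast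
  obtain c1 d1 where e2: "w2 = Complex (of_int c1) (of_int d1)" using ZI_ex w2 by blast
  define w where "w = Q a1 b1 c1 d1"
  have "of_int (qn w) = (of_int (a * K) :: complex)"
    using dv unfolding e1 e2 w_def by (simp add: qn_def complex_eq_iff power2_eq_square)
  then have "qn w = a * K" using of_int_eq_iff by blast
  then obtain \<xi> where xi: "qn \<xi> = a" "qdvd a (qmul \<xi> w)" using lemmaF[of a w] a by auto
  obtain t0 t1 t2 t3 where t: "qmul \<xi> w = Q (a*t0) (a*t1) (a*t2) (a*t3)"
    using xi(2) unfolding qdvd_iff_smul qsm_def by auto
  define s where "s = Complex (of_int (q0 \<xi>)) (of_int (q1 \<xi>))"
  define q where "q = Complex (of_int (q2 \<xi>)) (of_int (q3 \<xi>))"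
  have "s * w1 - q * cnj w2 = Complex (of_int (q0 (qmul \<xi> w))) (of_int (q1 (qmul \<xi> w)))"
    unfolding s_def q_def e1 e2 w_def by (simp add: complex_eq_iff qmul_def)
  also have "\<dots> = Complex (of_int (a * t0)) (of_int (a * t1))" using t by simp
  finally have A: "(s * w1 - q * cnj w2) / of_int a = Complex (of_int t0) (of_int t1)"
    using div_int_ZI[of a] a by simp
  have "s * w2 + q * cnj w1 = Complex (of_int (q2 (qmul \<xi> w))) (of_int (q3 (qmul \<xi> w)))"
    unfolding s_def q_def e1 e2 w_def by (simp add: complex_eq_iff qmul_def)
  also have "\<dots> = Complex (of_int (a * t2)) (of_int (a * t3))" using t by simp
  finally have B: "(s * w2 + q * cnj w1) / of_int a = Complex (of_int t2) (of_int t3)"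
    using div_int_ZI[of a] a by simp
  have ra: "real_of_int a = real_of_int (qn \<xi>)" using xi(1) by simp
  have C: "s * cnj s + q * cnj q = of_int a"
    using ra unfolding s_def q_def by (simp add: complex_eq_iff qn_def power2_eq_square)
  have "s \<in> Rset GaussCase" "q \<in> Rset GaussCase" unfolding s_def q_def by (simp_all add: ZI_Complex)
  then show ?thesis using A B C ZI_Complex by metis
qed


lemma DC_complex:
  assumes z: "z \<in> Rset GaussCase" and k: "(k::int) > 0" and e: "z * cnj z = of_int (n * k^2)"
  shows "\<exists>h. h \<in> Rset GaussCase \<and> h * cnj h = of_int n"
proof -
  obtain a b where ab: "z = Complex (of_int a) (of_int b)" using ZI_ex z by blast
  have "(of_int (a^2 + b^2) :: complex) = of_int (n * k^2)" using e norm_ZI[of a b] ab by simp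
  then have "a^2 + b^2 = n * k^2" using of_int_eq_iff by blast
  then obtain x y where "x^2 + y^2 = n" using DC[of k a b n] k by blast
  then show ?thesis using norm_ZI[of x y] ZI_Complex[of x y] by metis
qed

definition nz :: "complex \<Rightarrow> nat" where "nz z = nat \<lfloor>(cmod z)^2\<rfloor>"

lemma nz_eq: "z \<in> Rset GaussCase \<Longrightarrow> real (nz z) = (cmod z)^2"
proof -
  assume "z \<in> Rset GaussCase"
  then obtain a b where ab: "z = Complex (of_int a) (of_int b)" using ZI_ex by blast
  have "(cmod z)^2 = of_int (a^2 + b^2)" using ab by (simp add: cmod_power2)
  then show ?thesis unfolding nz_def by simp
qed

lemma round_close:
  fixes t :: complex
  shows "(cmod (t - Complex (of_int (round (Re t))) (of_int (round (Im t)))))^2 \<le> 1/2"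
proof -
  have a: "\<bar>Re t - of_int (round (Re t))\<bar> \<le> 1/2" using of_int_round_abs_le[of "Re t"] by (simp add: abs_minus_commute)
  have b: "\<bar>Im t - of_int (round (Im t))\<bar> \<le> 1/2" using of_int_round_abs_le[of "Im t"] by (simp add: abs_minus_commute)
  have h4: "(1/2::real)^2 = 1/4" by (simp add: power2_eq_square)
  have A: "\<bar>Re t - of_int (round (Re t))\<bar>^2 \<le> (1/2)^2"
    using a by (intro power_mono) auto
  have B: "\<bar>Im t - of_int (round (Im t))\<bar>^2 \<le> (1/2)^2"
    using b by (intro power_mono) auto
  have C: "(cmod (t - Complex (of_int (round (Re t))) (of_int (round (Im t)))))^2 =
     (Re t - of_int (round (Re t)))^2 + (Im t - of_int (round (Im t)))^2"
    by (simp only: cmod_power2) simp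
  show ?thesis using A B unfolding C power2_abs h4 by linarith
qed

lemma gbezout:
  assumes x: "x \<in> Rset GaussCase" and y: "y \<in> Rset GaussCase" and nz0: "x \<noteq> 0 \<or> y \<noteq> 0"
  shows "\<exists>g u v. g \<in> Rset GaussCase \<and> u \<in> Rset GaussCase \<and> v \<in> Rset GaussCase \<and>
           g = u * x + v * y \<and> g \<noteq> 0 \<and> x / g \<in> Rset GaussCase \<and> y / g \<in> Rset GaussCase"
proof -
  define I where "I = {z. \<exists>u v. u \<in> Rset GaussCase \<and> v \<in> Rset GaussCase \<and> z = u * x + v * y}"
  have I_ZI: "z \<in> I \<Longrightarrow> z \<in> Rset GaussCase" for z
    using x y by (auto simp: I_def intro!: Rset_add Rset_mult)
  have xI: "x \<in> I" unfolding I_def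
    by (rule CollectI, rule exI[of _ 1], rule exI[of _ 0]) (simp add: Rset_of_int[of 1, simplified] Rset_of_int[of 0, simplified])
  have yI: "y \<in> I" unfolding I_def
    by (rule CollectI, rule exI[of _ 0], rule exI[of _ 1]) (simp add: Rset_of_int[of 1, simplified] Rset_of_int[of 0, simplified])
  have ex: "\<exists>n. \<exists>z\<in>I. z \<noteq> 0 \<and> nz z = n" using xI yI nz0 by blast
  define n0 where "n0 = (LEAST n. \<exists>z\<in>I. z \<noteq> 0 \<and> nz z = n)"
  obtain g where g: "g \<in> I" "g \<noteq> 0" "nz g = n0"
    using LeastI_ex[OF ex] unfolding n0_def by blast
  have gmin: "z \<in> I \<Longrightarrow> z \<noteq> 0 \<Longrightarrow> nz g \<le> nz z" for z
    using g(3) unfolding n0_def by (auto intro: Least_le)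
  have gZI: "g \<in> Rset GaussCase" using I_ZI g by blast
  have divs: "z / g \<in> Rset GaussCase" if zI: "z \<in> I" for z
  proof -
    define q where "q = Complex (of_int (round (Re (z / g)))) (of_int (round (Im (z / g))))"
    have qZI: "q \<in> Rset GaussCase" unfolding q_def by (rule ZI_Complex)
    define r where "r = z - q * g"
    have rI: "r \<in> I"
    proof -
      obtain u1 v1 where 1: "u1 \<in> Rset GaussCase" "v1 \<in> Rset GaussCase" "z = u1 * x + v1 * y"
        using zI I_def by auto
      obtain u2 v2 where 2: "u2 \<in> Rset GaussCase" "v2 \<in> Rset GaussCase" "g = u2 * x + v2 * y"
        using g I_def by auto
      have "r = (u1 - q * u2) * x + (v1 - q * v2) * y" unfolding r_def 1 2 by (simp add: algebra_simps)
      moreover have "u1 - q * u2 \<in> Rset GaussCase" "v1 - q * v2 \<in> Rset GaussCase"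
        using 1 2 qZI by (auto intro!: Rset_diff Rset_mult)
      ultimately show ?thesis unfolding I_def by blast
    qed
    have "r = g * (z / g - q)" unfolding r_def using g(2) by (simp add: field_simps)
    then have "(cmod r)^2 = (cmod g)^2 * (cmod (z / g - q))^2" by (simp add: norm_mult power_mult_distrib)
    also have "\<dots> \<le> (cmod g)^2 * (1/2)" using round_close[of "z / g"] unfolding q_def
      by (intro mult_left_mono) auto
    also have "\<dots> < (cmod g)^2" using g(2) by simp
    finally have lt: "(cmod r)^2 < (cmod g)^2" .
    have "r = 0"
    proof (rule ccontr)
      assume "r \<noteq> 0"
      then have "nz g \<le> nz r" using gmin rI by blast
      then have "real (nz g) \<le> real (nz r)" by simp
      then have "(cmod g)^2 \<le> (cmod r)^2" using nz_eq[OF gZI] nz_eq[OF I_ZI[OF rI]] by (simp only:)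
      then show False using lt leD by blast
    qed
    then have "z / g = q" unfolding r_def using g(2) by (simp add: field_simps)
    then show ?thesis using qZI by simp
  qed
  obtain u v where uv: "u \<in> Rset GaussCase" "v \<in> Rset GaussCase" "g = u * x + v * y"
    using g I_def by auto
  have "g \<in> Rset GaussCase \<and> u \<in> Rset GaussCase \<and> v \<in> Rset GaussCase \<and>
           g = u * x + v * y \<and> g \<noteq> 0 \<and> x / g \<in> Rset GaussCase \<and> y / g \<in> Rset GaussCase"
    using uv gZI g(2) divs[OF xI] divs[OF yI] by simp
  then show ?thesis by blast
qed



locale Mloc =
  fixes \<alpha> \<beta> \<gamma> :: complex and M :: "complex^2^2"
  assumes M_def: "M = vector [vector [\<alpha>, \<beta>], vector [cnj \<beta>, \<gamma>]]"
    and ca: "cnj \<alpha> = \<alpha>" and cg: "cnj \<gamma> = \<gamma>"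
begin

lemma Mv1: "(M *v v)$1 = \<alpha> * v$1 + \<beta> * v$2"
  by (simp add: M_def matrix_vector_mult_def sum_2)
lemma Mv2: "(M *v v)$2 = cnj \<beta> * v$1 + \<gamma> * v$2"
  by (simp add: M_def matrix_vector_mult_def sum_2)
lemma hf: "hform M u v = cnj (u$1) * (\<alpha> * v$1 + \<beta> * v$2) + cnj (u$2) * (cnj \<beta> * v$1 + \<gamma> * v$2)"
  by (simp add: hform_def sum_2 Mv1 Mv2)
lemma detM: "det M = \<alpha> * \<gamma> - \<beta> * cnj \<beta>"
  by (simp add: det_2 M_def)

lemma I1: "\<alpha> * hform M a a = (\<alpha> * a$1 + \<beta> * a$2) * cnj (\<alpha> * a$1 + \<beta> * a$2) + det M * (a$2 * cnj (a$2))"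
  using ca by (simp add: hf detM algebra_simps)
lemma I1': "\<gamma> * hform M a a = (cnj \<beta> * a$1 + \<gamma> * a$2) * cnj (cnj \<beta> * a$1 + \<gamma> * a$2) + det M * (a$1 * cnj (a$1))"
  using cg by (simp add: hf detM algebra_simps)
lemma I5: "(\<alpha> * a$1 + \<beta> * a$2) * cnj (cnj \<beta> * a$1 + \<gamma> * a$2) = \<beta> * hform M a a + det M * (a$1 * cnj (a$2))"
  using ca cg by (simp add: hf detM algebra_simps)
lemma I2: "hform M (perp (M *v a)) (perp (M *v a)) = det M * hform M a a"
  using ca cg by (simp add: hf detM perp_def Mv1 Mv2 algebra_simps)
lemma I3: "hform M a (perp (M *v a)) = 0"
  using ca cg by (simp add: hf perp_def Mv1 Mv2 algebra_simps)
lemma I4a: "hform M (c *s x) (c *s x) = cnj c * c * hform M x x"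
  by (simp add: hf algebra_simps)
lemma I4b: "hform M a (c *s x) = c * hform M a x"
  by (simp add: hf algebra_simps)

lemma ortho_from:
  assumes "hform M a1 a1 = lam" and "cnj c * c * det M = 1" and "a2 = c *s perp (M *v a1)"
  shows "hform M a2 a2 = lam" "hform M a1 a2 = 0"
proof -
  have "hform M a2 a2 = cnj c * c * (det M * hform M a1 a1)"
    unfolding assms(3) I4a I2 ..
  also have "\<dots> = lam" using assms(1,2) by (simp add: mult.assoc[symmetric])
  finally show "hform M a2 a2 = lam" .
  show "hform M a1 a2 = 0" unfolding assms(3) I4b I3 by simp
qed


lemma Rvec_iff: "a \<in> Rvec c \<longleftrightarrow> a$1 \<in> Rset c \<and> a$2 \<in> Rset c"
  by (simp add: Rvec_def forall_2)

lemma construct: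
  assumes s: "s \<in> Rset c" and q: "q \<in> Rset c"
    and sq: "s * cnj s + q * cnj q = of_nat \<nu> * \<alpha>"
    and a0: "\<alpha> \<noteq> 0" and d0: "\<delta> \<noteq> 0" and dd: "\<delta> * cnj \<delta> = det M"
    and P: "(cnj \<delta> * s - \<beta> * q) / \<alpha> \<in> Rset c"
    and T: "(cnj \<beta> * s + \<delta> * q) / \<alpha> \<in> Rset c"
  shows "\<exists>a1 a2. orthoregular_type c M (of_nat \<nu> * det M) \<delta> a1 a2"
proof -
  define Pv where "Pv = (cnj \<delta> * s - \<beta> * q) / \<alpha>"
  define Tv where "Tv = (cnj \<beta> * s + \<delta> * q) / \<alpha>"
  define a1 where "a1 = (vector [Pv, q] :: complex^2)"
  have w1: "(M *v a1)$1 = cnj \<delta> * s" unfolding Mv1 a1_def Pv_def using a0 by (simp add: field_simps)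
  have dd': "cnj \<delta> * \<delta> = \<alpha> * \<gamma> - \<beta> * cnj \<beta>" using dd detM by (simp add: mult.commute)
  have e1: "\<alpha> * (cnj \<beta> * Pv + \<gamma> * q) = cnj \<beta> * (cnj \<delta> * s - \<beta> * q) + \<alpha> * \<gamma> * q"
    unfolding Pv_def using a0 by (simp add: field_simps)
  have e2: "\<alpha> * (cnj \<delta> * Tv) = cnj \<delta> * (cnj \<beta> * s + \<delta> * q)"
    unfolding Tv_def using a0 by (simp add: field_simps)
  have e3: "cnj \<delta> * (cnj \<beta> * s + \<delta> * q) - (cnj \<beta> * (cnj \<delta> * s - \<beta> * q) + \<alpha> * \<gamma> * q)
      = q * (cnj \<delta> * \<delta> - (\<alpha> * \<gamma> - \<beta> * cnj \<beta>))" by (simp add: algebra_simps)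
  have "\<alpha> * (cnj \<beta> * Pv + \<gamma> * q) = \<alpha> * (cnj \<delta> * Tv)"
  proof -
    have "cnj \<delta> * (cnj \<beta> * s + \<delta> * q) - (cnj \<beta> * (cnj \<delta> * s - \<beta> * q) + \<alpha> * \<gamma> * q) = 0"
      using e3 dd' by simp
    then show ?thesis unfolding e1 e2 by simp
  qed
  then have w2: "(M *v a1)$2 = cnj \<delta> * Tv" unfolding Mv2 a1_def using a0 by simp
  have "\<alpha> * hform M a1 a1 = (cnj \<delta> * s) * cnj (cnj \<delta> * s) + det M * (q * cnj q)"
  proof -
    have w1': "\<alpha> * Pv + \<beta> * q = cnj \<delta> * s" using w1 unfolding Mv1 a1_def by simp
    show ?thesis using I1[of a1] by (simp only: a1_def vector_2 w1')
  qed
  also have "\<dots> = det M * (s * cnj s + q * cnj q)" using dd by (simp add: algebra_simps)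
  also have "\<dots> = \<alpha> * (of_nat \<nu> * det M)" using sq by (simp add: algebra_simps)
  finally have Q1: "hform M a1 a1 = of_nat \<nu> * det M" using a0 by simp
  define a2 where "a2 = (1 / \<delta>) *s perp (M *v a1)"
  have a21: "a2$1 = - cnj Tv" unfolding a2_def perp_def using w2 d0 by simp
  have a22: "a2$2 = cnj s" unfolding a2_def perp_def using w1 d0 by simp
  have "det M \<noteq> 0" using dd d0 by (metis complex_cnj_zero_iff mult_eq_0_iff)
  then have cc: "cnj (1 / \<delta>) * (1 / \<delta>) * det M = 1" using dd d0 by (simp add: field_simps)
  have o: "hform M a2 a2 = of_nat \<nu> * det M" "hform M a1 a2 = 0"
    using ortho_from[OF Q1 cc a2_def] by auto
  have "a1 \<in> Rvec c" unfolding Rvec_iff a1_def using P q Pv_def by simp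
  moreover have "a2 \<in> Rvec c" unfolding Rvec_iff a21 a22 using T s unfolding Tv_def[symmetric]
    by (simp only: Rset_uminus Rset_cnj)
  ultimately have "orthoregular_type c M (of_nat \<nu> * det M) \<delta> a1 a2"
    unfolding orthoregular_type_def orthoregular_def using Q1 o a2_def by simp
  then show ?thesis by blast
qed


lemma Rset_ZI: "x \<in> Rset c \<Longrightarrow> x \<in> Rset GaussCase"
  by (cases c) (auto simp: ZZ_sub_ZI)

lemma part3:
  assumes bR: "\<beta> \<in> Rset c" and aA: "\<alpha> = of_int A" and gC: "\<gamma> = of_int C"
    and dD: "det M = of_int Dn" and Dn0: "Dn > 0"
    and dd: "\<delta> * cnj \<delta> = det M" and nu: "\<nu> > 0" and dR: "of_nat \<nu> * \<delta> \<in> Rset c"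
    and a1: "a1 \<in> Rvec c" and Q1: "hform M a1 a1 = of_nat \<nu> * det M"
  shows "\<exists>a2. orthoregular c M (of_nat \<nu> * det M) a1 a2"
proof -
  define p where "p = a1$1"
  define q where "q = a1$2"
  have pR: "p \<in> Rset c" and qR: "q \<in> Rset c" using a1 unfolding Rvec_iff p_def q_def by auto
  have aR: "\<alpha> \<in> Rset c" "\<gamma> \<in> Rset c" using aA gC Rset_of_int by auto
  define w1 where "w1 = (M *v a1)$1"
  define w2 where "w2 = (M *v a1)$2"
  have w1e: "w1 = \<alpha> * p + \<beta> * q" unfolding w1_def Mv1 p_def q_def ..
  have w2e: "w2 = cnj \<beta> * p + \<gamma> * q" unfolding w2_def Mv2 p_def q_def ..
  have w1R: "w1 \<in> Rset c" unfolding w1e using aR bR pR qR by (intro Rset_add Rset_mult)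
  have w2R: "w2 \<in> Rset c" unfolding w2e using aR bR pR qR by (intro Rset_add Rset_mult Rset_cnj)
  have "\<alpha> * (of_nat \<nu> * det M) = w1 * cnj w1 + det M * (q * cnj q)"
    using I1[of a1] Q1 unfolding w1e p_def q_def by simp
  then have E1: "w1 * cnj w1 = det M * (\<alpha> * of_nat \<nu> - q * cnj q)" by (simp add: algebra_simps)
  have "\<gamma> * (of_nat \<nu> * det M) = w2 * cnj w2 + det M * (p * cnj p)"
    using I1'[of a1] Q1 unfolding w2e p_def q_def by simp
  then have E2: "w2 * cnj w2 = det M * (\<gamma> * of_nat \<nu> - p * cnj p)" by (simp add: algebra_simps)
  have E3: "w1 * cnj w2 = det M * (\<beta> * of_nat \<nu> + p * cnj q)"
    using I5[of a1] Q1 unfolding w1e w2e p_def q_def by (simp add: algebra_simps)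
  have DM0: "det M \<noteq> 0" using dD Dn0 by simp
  have d0: "\<delta> \<noteq> 0" using dd DM0 by auto
  show ?thesis
  proof (cases c)
    case IntCase
    obtain E where E: "of_nat \<nu> * \<delta> = of_int E" using dR IntCase ZZ_ex by blast
    have "cnj (of_nat \<nu> * \<delta>) = of_nat \<nu> * \<delta>" using E by simp
    then have cd: "cnj \<delta> = \<delta>" using nu by simp
    have "(of_int (E^2) :: complex) = (of_nat \<nu> * \<delta>)^2" using E by simp
    also have "\<dots> = of_nat \<nu> ^ 2 * (\<delta> * cnj \<delta>)" using cd by (simp add: power2_eq_square algebra_simps)
    also have "\<dots> = of_int (int \<nu> ^ 2 * Dn)" using dd dD by simp
    finally have "E^2 = int \<nu> ^ 2 * Dn" using of_int_eq_iff by blast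
    then have "int \<nu> ^ 2 dvd E^2" by simp
    then have "int \<nu> dvd E" using pow_divides_pow_iff[of 2] by simp
    then obtain d where d: "E = int \<nu> * d" by (blast elim: dvdE)
    have \<delta>d: "\<delta> = of_int d" using E d nu by simp
    have dsq: "det M = of_int (d^2)" using dd \<delta>d by (simp add: power2_eq_square)
    have dn0: "d \<noteq> 0" using d0 \<delta>d by simp
    obtain W1 where W1: "w1 = of_int W1" using w1R IntCase ZZ_ex by blast
    obtain W2 where W2: "w2 = of_int W2" using w2R IntCase ZZ_ex by blast
    obtain Qi where Qi: "q = of_int Qi" using qR IntCase ZZ_ex by blast
    obtain Pi where Pi: "p = of_int Pi" using pR IntCase ZZ_ex by blast
    have "(of_int (W1^2) :: complex) = of_int (d^2 * (A * int \<nu> - Qi^2))"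
      using E1 unfolding W1 Qi dsq aA by (simp add: power2_eq_square)
    then have "W1^2 = d^2 * (A * int \<nu> - Qi^2)" using of_int_eq_iff by blast
    then have "d dvd W1" using pow_divides_pow_iff[of 2 d W1] by simp
    then obtain V1 where V1: "W1 = d * V1" by (blast elim: dvdE)
    have "(of_int (W2^2) :: complex) = of_int (d^2 * (C * int \<nu> - Pi^2))"
      using E2 unfolding W2 Pi dsq gC by (simp add: power2_eq_square)
    then have "W2^2 = d^2 * (C * int \<nu> - Pi^2)" using of_int_eq_iff by blast
    then have "d dvd W2" using pow_divides_pow_iff[of 2 d W2] by simp
    then obtain V2 where V2: "W2 = d * V2" by (blast elim: dvdE)
    define a2 where "a2 = (1 / \<delta>) *s perp (M *v a1)"
    have a21: "a2$1 = - of_int V2" unfolding a2_def perp_def using dn0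
      by (simp add: w2_def[symmetric] W2 V2 \<delta>d)
    have a22: "a2$2 = of_int V1" unfolding a2_def perp_def using dn0
      by (simp add: w1_def[symmetric] W1 V1 \<delta>d)
    have cc: "cnj (1 / \<delta>) * (1 / \<delta>) * det M = 1" using dd d0 DM0 by (simp add: field_simps)
    have o: "hform M a2 a2 = of_nat \<nu> * det M" "hform M a1 a2 = 0"
      using ortho_from[OF Q1 cc a2_def] by auto
    have "a2 \<in> Rvec c" unfolding Rvec_iff a21 a22 IntCase
      using Rset_of_int Rset_uminus by blast
    then show ?thesis unfolding orthoregular_def using a1 Q1 o by blast
  next
    case GaussCase
    have nz: "w1 \<noteq> 0 \<or> w2 \<noteq> 0"
    proof (rule ccontr)
      assume "\<not> ?thesis"
      then have "hform M a1 a1 = 0" unfolding hform_def sum_2 w1_def w2_def by simp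
      then show False using Q1 DM0 nu by simp
    qed
    obtain g u v where g: "g \<in> Rset GaussCase" "u \<in> Rset GaussCase" "v \<in> Rset GaussCase"
      "g = u * w1 + v * w2" "g \<noteq> 0" "w1 / g \<in> Rset GaussCase" "w2 / g \<in> Rset GaussCase"
      using gbezout[of w1 w2] w1R w2R nz GaussCase by blast
    define m where "m = u * cnj u * (\<alpha> * of_nat \<nu> - q * cnj q) + v * cnj v * (\<gamma> * of_nat \<nu> - p * cnj p)
       + u * cnj v * (\<beta> * of_nat \<nu> + p * cnj q) + cnj u * v * cnj (\<beta> * of_nat \<nu> + p * cnj q)"
    have "g * cnj g = u * cnj u * (w1 * cnj w1) + v * cnj v * (w2 * cnj w2) + u * cnj v * (w1 * cnj w2)
        + cnj u * v * cnj (w1 * cnj w2)" unfolding g(4) by (simp add: algebra_simps)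
    then have gm: "g * cnj g = det M * m" unfolding m_def E1 E2 E3 using dD by (simp add: algebra_simps)
    have mR: "m \<in> Rset GaussCase" unfolding m_def using g(2,3) aR bR pR qR GaussCase
      by (intro Rset_add Rset_mult Rset_diff Rset_cnj Rset_of_nat; simp)
    have "cnj (g * cnj g) = g * cnj g" by simp
    then have "cnj (det M * m) = det M * m" using gm by simp
    then have "cnj m = m" using dD DM0 by simp
    then obtain M0 where M0: "m = of_int M0" using ZI_real_int mR by blast
    define z where "z = of_nat \<nu> * g * cnj (of_nat \<nu> * \<delta>)"
    have zR: "z \<in> Rset GaussCase" unfolding z_def
    proof (rule Rset_mult)
      show "of_nat \<nu> * g \<in> Rset GaussCase" using g(1) by (intro Rset_mult Rset_of_nat)
      show "cnj (of_nat \<nu> * \<delta>) \<in> Rset GaussCase" using dR GaussCase by (intro Rset_cnj) simp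
    qed
    have "z * cnj z = of_nat \<nu> ^ 4 * (g * cnj g) * (\<delta> * cnj \<delta>)"
      unfolding z_def by (simp add: algebra_simps power2_eq_square power4_eq_xxxx)
    also have "\<dots> = of_int (M0 * (int \<nu> ^ 2 * Dn)^2)" unfolding gm dd M0 dD
      by (simp add: algebra_simps power2_eq_square power4_eq_xxxx)
    finally have zz: "z * cnj z = of_int (M0 * (int \<nu> ^ 2 * Dn)^2)" .
    obtain h where h: "h \<in> Rset GaussCase" "h * cnj h = of_int M0"
      using DC_complex[OF zR _ zz] nu Dn0 by auto
    have M00: "M0 \<noteq> 0" using gm g(5) M0 DM0 by auto
    define cf where "cf = cnj h / cnj g"
    define a2 where "a2 = cf *s perp (M *v a1)"
    have a21: "a2$1 = - cnj (h * (w2 / g))" unfolding a2_def perp_def cf_def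
      by (simp add: w2_def[symmetric])
    have a22: "a2$2 = cnj (h * (w1 / g))" unfolding a2_def perp_def cf_def
      by (simp add: w1_def[symmetric])
    have "cnj cf * cf * det M = (h * cnj h) * det M / (g * cnj g)" unfolding cf_def
      by (simp add: field_simps)
    also have "\<dots> = 1" unfolding gm h(2) M0 using DM0 M00 by simp
    finally have cc: "cnj cf * cf * det M = 1" .
    have o: "hform M a2 a2 = of_nat \<nu> * det M" "hform M a1 a2 = 0"
      using ortho_from[OF Q1 cc a2_def] by auto
    have "a2 \<in> Rvec c" unfolding Rvec_iff a21 a22 GaussCase
      using h(1) g(6,7) by (intro conjI Rset_uminus Rset_cnj Rset_mult)
    then show ?thesis unfolding orthoregular_def using a1 Q1 o by blast
  qed
qed


lemma int_delta:
  assumes nu: "\<nu> > 0" and dR: "of_nat \<nu> * \<delta> \<in> Rset IntCase" and dd: "\<delta> * cnj \<delta> = of_int Dn"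
  shows "\<exists>d. \<delta> = of_int d \<and> d^2 = Dn"
proof -
  obtain E where E: "of_nat \<nu> * \<delta> = of_int E" using dR ZZ_ex by blast
  have "cnj (of_nat \<nu> * \<delta>) = of_nat \<nu> * \<delta>" using E by simp
  then have cd: "cnj \<delta> = \<delta>" using nu by simp
  have "(of_int (E^2) :: complex) = (of_nat \<nu> * \<delta>)^2" using E by simp
  also have "\<dots> = of_nat \<nu> ^ 2 * (\<delta> * cnj \<delta>)" using cd by (simp add: power2_eq_square algebra_simps)
  also have "\<dots> = of_int (int \<nu> ^ 2 * Dn)" using dd by simp
  finally have "E^2 = int \<nu> ^ 2 * Dn" using of_int_eq_iff by blast
  then have "int \<nu> ^ 2 dvd E^2" by simp
  then have "int \<nu> dvd E" using pow_divides_pow_iff[of 2] by simp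
  then obtain d where d: "E = int \<nu> * d" by (blast elim: dvdE)
  have \<delta>d: "\<delta> = of_int d" using E d nu by simp
  have "(of_int (d^2) :: complex) = of_int Dn" using dd \<delta>d by (simp add: power2_eq_square)
  then show ?thesis using \<delta>d of_int_eq_iff by blast
qed

lemma part1_fwd:
  assumes aA: "\<alpha> = of_int A" and bR: "\<beta> \<in> Rset IntCase" and dD: "det M = of_int Dn" and Dn0: "Dn > 0"
    and dd: "\<delta> * cnj \<delta> = det M"
    and T: "orthoregular_type IntCase M (of_nat \<nu> * det M) \<delta> a1 a2"
  shows "\<exists>x y :: int. \<alpha> * of_nat \<nu> = of_int (x^2 + y^2)"
proof -
  have a1: "a1 \<in> Rvec IntCase" and a2: "a2 \<in> Rvec IntCase"
    and Q1: "hform M a1 a1 = of_nat \<nu> * det M" and a2e: "a2 = (1 / \<delta>) *s perp (M *v a1)"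
    using T unfolding orthoregular_type_def orthoregular_def by auto
  define w1 where "w1 = (M *v a1)$1"
  have DM0: "det M \<noteq> 0" using dD Dn0 by simp
  have d0: "\<delta> \<noteq> 0" using dd DM0 by auto
  have qR: "a1$2 \<in> Rset IntCase" using a1 Rvec_iff by blast
  have w1R: "w1 \<in> Rset IntCase" unfolding w1_def Mv1
    using aA Rset_of_int bR a1 Rvec_iff by (intro Rset_add Rset_mult) auto
  have sR: "a2$2 \<in> Rset IntCase" using a2 Rvec_iff by blast
  have "a2$2 = cnj w1 / \<delta>" unfolding a2e w1_def perp_def by simp
  then have "\<delta> * a2$2 = cnj w1" using d0 by (simp add: field_simps)
  then have "cnj (\<delta> * a2$2) = w1" by simp
  then have w1s: "w1 = cnj \<delta> * cnj (a2$2)" by simp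
  obtain S where S: "a2$2 = of_int S" using sR ZZ_ex by blast
  obtain Qi where Qi: "a1$2 = of_int Qi" using qR ZZ_ex by blast
  have "\<alpha> * (of_nat \<nu> * det M) = w1 * cnj w1 + det M * (a1$2 * cnj (a1$2))"
    using I1[of a1] Q1 unfolding w1_def Mv1 by simp
  also have "\<dots> = det M * of_int (S^2 + Qi^2)" unfolding w1s S Qi using dd
    by (simp add: algebra_simps power2_eq_square)
  finally have "det M * (\<alpha> * of_nat \<nu>) = det M * of_int (S^2 + Qi^2)" by (simp add: algebra_simps)
  then have "\<alpha> * of_nat \<nu> = of_int (S^2 + Qi^2)" using DM0 by simp
  then show ?thesis by blast
qed

lemma part2:
  assumes aA: "\<alpha> = of_int A" and A0: "A > 0" and gC: "\<gamma> = of_int C" and bR: "\<beta> \<in> Rset GaussCase"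
    and dd: "\<delta> * cnj \<delta> = det M" and d0: "\<delta> \<noteq> 0" and nu: "\<nu> > 0"
    and dR: "of_nat \<nu> * \<delta> \<in> Rset GaussCase"
  shows "\<exists>a1 a2. orthoregular_type GaussCase M (of_nat \<nu> * det M) \<delta> a1 a2"
proof -
  define w1 where "w1 = cnj (of_nat \<nu> * \<delta>)"
  define w2 where "w2 = of_nat \<nu> * cnj \<beta>"
  have w1R: "w1 \<in> Rset GaussCase" unfolding w1_def using dR by (rule Rset_cnj)
  have w2R: "w2 \<in> Rset GaussCase" unfolding w2_def using bR by (intro Rset_mult Rset_of_nat Rset_cnj)
  have "w1 * cnj w1 + w2 * cnj w2 = of_nat \<nu> * of_nat \<nu> * (\<delta> * cnj \<delta> + \<beta> * cnj \<beta>)"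
    unfolding w1_def w2_def by (simp add: algebra_simps)
  also have "\<dots> = of_int (int \<nu> * A * (int \<nu> * C))" unfolding dd detM aA gC by simp
  finally have N: "w1 * cnj w1 + w2 * cnj w2 = of_int (int \<nu> * A * (int \<nu> * C))" .
  have a0: "int \<nu> * A > 0" using nu A0 by simp
  obtain s q where sq: "s \<in> Rset GaussCase" "q \<in> Rset GaussCase" "s * cnj s + q * cnj q = of_int (int \<nu> * A)"
    "(s * w1 - q * cnj w2) / of_int (int \<nu> * A) \<in> Rset GaussCase"
    "(s * w2 + q * cnj w1) / of_int (int \<nu> * A) \<in> Rset GaussCase"
    using F_complex[OF w1R w2R a0 N] by blast
  have nz: "(of_nat \<nu> :: complex) \<noteq> 0" using nu by simp
  have A0': "(of_int A :: complex) \<noteq> 0" using A0 by simp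
  have P: "(s * w1 - q * cnj w2) / of_int (int \<nu> * A) = (cnj \<delta> * s - \<beta> * q) / \<alpha>"
    unfolding w1_def w2_def aA using nz A0' by (simp add: field_simps)
  have T: "(s * w2 + q * cnj w1) / of_int (int \<nu> * A) = (cnj \<beta> * s + \<delta> * q) / \<alpha>"
    unfolding w1_def w2_def aA using nz A0' by (simp add: field_simps)
  have S: "s * cnj s + q * cnj q = of_nat \<nu> * \<alpha>" using sq(3) aA by simp
  show ?thesis using construct[OF sq(1,2) S _ d0 dd] sq(4,5) P T aA A0' by simp
qed


lemma real_div_Ints: "(A::int) \<noteq> 0 \<Longrightarrow> (of_int n / of_int A :: real) \<in> \<int> \<Longrightarrow> A dvd n"
proof -
  assume A: "A \<noteq> 0" and "(of_int n / of_int A :: real) \<in> \<int>"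
  then obtain k where "(of_int n / of_int A :: real) = of_int k" by (auto elim: Ints_cases)
  then have "(of_int n :: real) = of_int (A * k)" using A by (simp add: field_simps)
  then have "n = A * k" using of_int_eq_iff by blast
  then show ?thesis by simp
qed

lemma ZI_norm_nonneg: "h \<in> Rset GaussCase \<Longrightarrow> h * cnj h = of_int H \<Longrightarrow> H \<ge> 0"
proof -
  assume "h \<in> Rset GaussCase" "h * cnj h = of_int H"
  then obtain a b where "h = Complex (of_int a) (of_int b)" using ZI_ex by blast
  then have "(of_int (a^2 + b^2) :: complex) = of_int H" using norm_ZI \<open>h * cnj h = of_int H\<close> by metis
  then have "a^2 + b^2 = H" using of_int_eq_iff by blast
  then show ?thesis by (metis sum_power2_ge_zero)
qed

lemma part1_bwd:
  assumes aA: "\<alpha> = of_int A" and A0: "A > 0" and gC: "\<gamma> = of_int C" and bR: "\<beta> \<in> Rset IntCase"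
    and dD: "det M = of_int Dn" and dd: "\<delta> * cnj \<delta> = det M" and nu: "\<nu> > 0"
    and dR: "of_nat \<nu> * \<delta> \<in> Rset IntCase" and d0: "\<delta> \<noteq> 0"
    and xy: "\<alpha> * of_nat \<nu> = of_int (x^2 + y^2)"
  shows "\<exists>a1 a2. orthoregular_type IntCase M (of_nat \<nu> * det M) \<delta> a1 a2"
proof -
  obtain d where \<delta>d: "\<delta> = of_int d" "d^2 = Dn" using int_delta[OF nu dR] dd dD by auto
  obtain b where \<beta>b: "\<beta> = of_int b" using bR ZZ_ex by blast
  have dn0: "d \<noteq> 0" using d0 \<delta>d by auto
  define \<omega> where "\<omega> = Complex (of_int d) (of_int b)"
  have \<omega>R: "\<omega> \<in> Rset GaussCase" unfolding \<omega>_def by (rule ZI_Complex)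
  have "(of_int Dn :: complex) = of_int (A * C - b^2)" using dD detM aA gC \<beta>b by (simp add: power2_eq_square)
  then have DnE: "Dn = A * C - b^2" using of_int_eq_iff by blast
  have \<omega>\<omega>: "\<omega> * cnj \<omega> = \<alpha> * \<gamma>" unfolding \<omega>_def norm_ZI aA gC using \<delta>d DnE by simp
  have \<alpha>R: "\<alpha> \<in> Rset GaussCase" using aA Rset_of_int by simp
  have a0: "\<alpha> \<noteq> 0" using aA A0 by simp
  obtain G U V where G: "G \<in> Rset GaussCase" "U \<in> Rset GaussCase" "V \<in> Rset GaussCase"
      "G = U * \<alpha> + V * \<omega>" "G \<noteq> 0" "\<alpha> / G \<in> Rset GaussCase" "\<omega> / G \<in> Rset GaussCase"
    using gbezout[OF \<alpha>R \<omega>R] a0 by blast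
  define K where "K = U * cnj U * \<alpha> + U * cnj V * cnj \<omega> + cnj U * V * \<omega> + V * cnj V * \<gamma>"
  have "G * cnj G = U * cnj U * \<alpha> * \<alpha> + U * cnj V * \<alpha> * cnj \<omega> + cnj U * V * \<alpha> * \<omega> + V * cnj V * (\<omega> * cnj \<omega>)"
    unfolding G(4) using ca by (simp add: algebra_simps)
  also have "\<dots> = \<alpha> * K" unfolding \<omega>\<omega> K_def by (simp add: algebra_simps)
  finally have GG: "G * cnj G = \<alpha> * K" .
  have KR: "K \<in> Rset GaussCase" unfolding K_def using G(2,3) \<omega>R \<alpha>R gC Rset_of_int
    by (intro Rset_add Rset_mult Rset_cnj) auto
  have "cnj (\<alpha> * K) = \<alpha> * K" unfolding GG[symmetric] by simp
  then have "cnj K = K" using ca a0 by simp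
  then obtain K0 where K0: "K = of_int K0" using ZI_real_int KR by blast
  define h where "h = \<alpha> / G"
  have hR: "h \<in> Rset GaussCase" unfolding h_def by (rule G(6))
  have hG: "h * G = \<alpha>" unfolding h_def using G(5) by simp
  have HR: "h * cnj h \<in> Rset GaussCase" using hR by (intro Rset_mult Rset_cnj)
  obtain H0 where H0: "h * cnj h = of_int H0" using ZI_real_int[OF HR] by auto
  have "(h * cnj h) * (G * cnj G) = \<alpha> * \<alpha>" using hG ca
    by (metis (no_types, lifting) complex_cnj_mult mult.assoc mult.left_commute)
  then have "of_int H0 * (of_int A * of_int K0) = (of_int (A * A) :: complex)" unfolding H0 GG K0 aA by simp
  then have "H0 * (A * K0) = A * A" using of_int_eq_iff by (metis of_int_mult)
  then have HK: "H0 * K0 = A" using A0 by (simp add: algebra_simps)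
  have H00: "H0 > 0" using ZI_norm_nonneg[OF hR H0] HK A0 by (metis less_le mult_zero_left)
  define z0 where "z0 = Complex (of_int x) (of_int y)"
  have z0R: "z0 \<in> Rset GaussCase" unfolding z0_def by (rule ZI_Complex)
  have z0n: "z0 * cnj z0 = of_int (A * int \<nu>)" unfolding z0_def norm_ZI xy[symmetric] aA by simp
  define z1 where "z1 = z0 * cnj h"
  have z1R: "z1 \<in> Rset GaussCase" unfolding z1_def using z0R hR by (intro Rset_mult Rset_cnj)
  have "z1 * cnj z1 = (z0 * cnj z0) * (h * cnj h)" unfolding z1_def by (simp add: algebra_simps)
  also have "\<dots> = of_int ((int \<nu> * K0) * H0^2)" unfolding z0n H0 HK[symmetric]
    by (simp add: algebra_simps power2_eq_square)
  finally have z1n: "z1 * cnj z1 = of_int ((int \<nu> * K0) * H0^2)" .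
  obtain u where u: "u \<in> Rset GaussCase" "u * cnj u = of_int (int \<nu> * K0)"
    using DC_complex[OF z1R H00 z1n] by blast
  define z where "z = h * u"
  have zR: "z \<in> Rset GaussCase" unfolding z_def using hR u(1) by (rule Rset_mult)
  have zn: "z * cnj z = of_int (int \<nu> * A)" unfolding z_def HK[symmetric]
    using H0 u(2) by (simp add: algebra_simps)
  have \<omega>zE: "\<omega> * z / \<alpha> = (\<omega> / G) * u" unfolding z_def h_def using a0 G(5) by (simp add: field_simps)
  have \<omega>zR: "\<omega> * z / \<alpha> \<in> Rset GaussCase" unfolding \<omega>zE by (rule Rset_mult[OF G(7) u(1)])
  obtain s0 q0 where z: "z = Complex (of_int s0) (of_int q0)" using ZI_ex zR by blast
  have "\<omega> * z / \<alpha> = Complex (of_int (d * s0 - b * q0) / of_int A) (of_int (d * q0 + b * s0) / of_int A)"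
    unfolding \<omega>_def z aA using A0 by (simp add: complex_eq_iff)
  then have "(of_int (d * s0 - b * q0) / of_int A :: real) \<in> \<int>" "(of_int (d * q0 + b * s0) / of_int A :: real) \<in> \<int>"
    using \<omega>zR by (simp_all add: ZI_iff)
  then have dv: "A dvd (d * s0 - b * q0)" "A dvd (d * q0 + b * s0)" using real_div_Ints A0 by auto
  then obtain k1 k2 where k: "d * s0 - b * q0 = A * k1" "d * q0 + b * s0 = A * k2" by (blast elim: dvdE)
  define S where "S = (of_int s0 :: complex)"
  define Qc where "Qc = (of_int q0 :: complex)"
  have P: "(cnj \<delta> * S - \<beta> * Qc) / \<alpha> = of_int k1"
  proof -
    have "(cnj \<delta> * S - \<beta> * Qc) = of_int (d * s0 - b * q0)" unfolding S_def Qc_def \<delta>d \<beta>b by simp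
    then show ?thesis unfolding k aA using A0 by simp
  qed
  have T: "(cnj \<beta> * S + \<delta> * Qc) / \<alpha> = of_int k2"
  proof -
    have "(cnj \<beta> * S + \<delta> * Qc) = of_int (d * q0 + b * s0)" unfolding S_def Qc_def \<delta>d \<beta>b by (simp add: algebra_simps)
    then show ?thesis unfolding k aA using A0 by simp
  qed
  have SQ: "S * cnj S + Qc * cnj Qc = of_nat \<nu> * \<alpha>"
  proof -
    have "S * cnj S + Qc * cnj Qc = z * cnj z" unfolding S_def Qc_def z norm_ZI by (simp add: power2_eq_square)
    then show ?thesis unfolding zn aA by simp
  qed
  show ?thesis
    using construct[OF _ _ SQ a0 d0 dd] P T Rset_of_int unfolding S_def Qc_def by metis
qed

end


theorem mainTheorem13:
  fixes c :: ring_case and \<alpha> \<beta> \<gamma> \<delta> :: complex and \<nu> :: nat and M :: "complex^2^2"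
  assumes M_def: "M = vector [vector [\<alpha>, \<beta>], vector [cnj \<beta>, \<gamma>]]"
    and entries: "\<alpha> \<in> Rset c" "\<beta> \<in> Rset c" "\<gamma> \<in> Rset c"
    and herm: "hermitian2 M" and pd: "posdef2 M"
    and sq: "abs_square_in c (det M)"
    and nu: "\<nu> > 0"
    and delta_in: "of_nat \<nu> * \<delta> \<in> Rset c"
    and delta_abs: "of_real ((cmod \<delta>)^2) = det M"
  shows "(c = IntCase \<longrightarrow>
            ((\<exists>a1 a2. orthoregular_type c M (of_nat \<nu> * det M) \<delta> a1 a2) \<longleftrightarrow>
             (\<exists>x y :: int. \<alpha> * of_nat \<nu> = of_int (x^2 + y^2))))
       \<and> (c = GaussCase \<longrightarrow> (\<exists>a1 a2. orthoregular_type c M (of_nat \<nu> * det M) \<delta> a1 a2))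
       \<and> (\<forall>a1 \<in> Rvec c. hform M a1 a1 = of_nat \<nu> * det M \<longrightarrow>
            (\<exists>a2. orthoregular c M (of_nat \<nu> * det M) a1 a2))"
proof -
  have hh: "\<forall>i j. M $ i $ j = cnj (M $ j $ i)" using herm unfolding hermitian2_def by blast
  have "M$1$1 = cnj (M$1$1)" "M$2$2 = cnj (M$2$2)" using hh by blast+
  then have ca: "cnj \<alpha> = \<alpha>" and cg: "cnj \<gamma> = \<gamma>" unfolding M_def by auto
  interpret L: Mloc \<alpha> \<beta> \<gamma> M by unfold_locales (use M_def ca cg in auto)
  have aZI: "\<alpha> \<in> Rset GaussCase" "\<gamma> \<in> Rset GaussCase" "\<beta> \<in> Rset GaussCase"
    using entries L.Rset_ZI by auto
  obtain A where aA: "\<alpha> = of_int A" using ZI_real_int aZI(1) ca by blast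
  obtain C where gC: "\<gamma> = of_int C" using ZI_real_int aZI(2) cg by blast
  have dd: "\<delta> * cnj \<delta> = det M" using delta_abs complex_norm_square[of \<delta>] by simp
  have dMR: "det M \<in> Rset GaussCase" unfolding L.detM using aZI by (intro Rset_diff Rset_mult Rset_cnj)
  have "cnj (det M) = det M" unfolding dd[symmetric] by simp
  then obtain Dn where dD: "det M = of_int Dn" using ZI_real_int dMR by blast
  define v1 where "v1 = (vector [1, 0] :: complex^2)"
  have "v1 \<noteq> 0" proof assume "v1 = 0" then have "v1$1 = 0" by simp then show False unfolding v1_def by simp qed
  then have "Re (hform M v1 v1) > 0" using pd unfolding posdef2_def by blast
  moreover have "hform M v1 v1 = \<alpha>" unfolding L.hf v1_def by simp
  ultimately have A0: "A > 0" using aA by simp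
  have a0: "\<alpha> \<noteq> 0" using aA A0 by simp
  define v2 where "v2 = (vector [- \<beta>, \<alpha>] :: complex^2)"
  have "v2 \<noteq> 0" proof assume "v2 = 0" then have "v2$2 = 0" by simp then show False unfolding v2_def using a0 by simp qed
  then have "Re (hform M v2 v2) > 0" using pd unfolding posdef2_def by blast
  moreover have "hform M v2 v2 = \<alpha> * det M" unfolding L.hf v2_def L.detM using ca by (simp add: algebra_simps)
  ultimately have "0 < real_of_int A * real_of_int Dn" using aA dD by simp
  then have "A * Dn > 0" by (metis of_int_0_less_iff of_int_mult)
  then have Dn0: "Dn > 0" using A0 by (simp add: zero_less_mult_iff)
  have d0: "\<delta> \<noteq> 0" using dd dD Dn0 by auto
  have P1: "c = IntCase \<longrightarrow>
            ((\<exists>a1 a2. orthoregular_type c M (of_nat \<nu> * det M) \<delta> a1 a2) \<longleftrightarrow>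
             (\<exists>x y :: int. \<alpha> * of_nat \<nu> = of_int (x^2 + y^2)))"
  proof
    assume cI: "c = IntCase"
    show "(\<exists>a1 a2. orthoregular_type c M (of_nat \<nu> * det M) \<delta> a1 a2) \<longleftrightarrow>
             (\<exists>x y :: int. \<alpha> * of_nat \<nu> = of_int (x^2 + y^2))"
    proof
      assume "\<exists>a1 a2. orthoregular_type c M (of_nat \<nu> * det M) \<delta> a1 a2"
      then obtain a1 a2 where "orthoregular_type IntCase M (of_nat \<nu> * det M) \<delta> a1 a2" using cI by blast
      then show "\<exists>x y :: int. \<alpha> * of_nat \<nu> = of_int (x^2 + y^2)"
        using L.part1_fwd[OF aA _ dD Dn0 dd] entries(2) cI by blast
    next
      assume "\<exists>x y :: int. \<alpha> * of_nat \<nu> = of_int (x^2 + y^2)"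
      then obtain x y :: int where xy: "\<alpha> * of_nat \<nu> = of_int (x^2 + y^2)" by blast
      show "\<exists>a1 a2. orthoregular_type c M (of_nat \<nu> * det M) \<delta> a1 a2"
        using L.part1_bwd[OF aA A0 gC _ dD dd nu _ d0 xy] entries(2) delta_in cI by blast
    qed
  qed
  have P2: "c = GaussCase \<longrightarrow> (\<exists>a1 a2. orthoregular_type c M (of_nat \<nu> * det M) \<delta> a1 a2)"
    using L.part2[OF aA A0 gC aZI(3) dd d0 nu] delta_in by blast
  have P3: "\<forall>a1 \<in> Rvec c. hform M a1 a1 = of_nat \<nu> * det M \<longrightarrow>
            (\<exists>a2. orthoregular c M (of_nat \<nu> * det M) a1 a2)"
    using L.part3[OF entries(2) aA gC dD Dn0 dd nu delta_in] by blast
  show ?thesis using P1 P2 P3 by blast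
qed


end
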